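(* Let $\Phi\in C([0,\infty))\cap C^1((0,\infty))$ with $\Phi(0)=0$, and suppose there are $0<a\le A<\infty$ with $a\le\Phi'(\xi)\le A$ for all $\xi\in(0,\infty)$. Let $\kappa$ be a nonnegative smooth compactly supported function on $\mathbb{R}^d$ with $\int\kappa=1$ and $\kappa^\epsilon=\epsilon^{-d}\kappa(\cdot/\epsilon)$. Then there is a constant $\vartheta\in[1,\infty)$ such that for every $\epsilon>0$, every nonnegative $u\in L^1_{\rm loc}(\mathbb{R}^d)$ and every $x\in\mathbb{R}^d$, \[(\Phi^{1/2}(u))^\epsilon(x)\le\vartheta\,\Phi^{1/2}(u^\epsilon(x)),\] where $u^\epsilon=u*\kappa^\epsilon$ and $(\Phi^{1/2}(u))^\epsilon=\Phi^{1/2}(u)*\kappa^\epsilon$. *)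

theory Defs
  imports "HOL-Analysis.Analysis"
begin

inductive iter_pderiv :: "('a::euclidean_space \<Rightarrow> real) \<Rightarrow> ('a \<Rightarrow> real) \<Rightarrow> bool"
  for f where
  base: "iter_pderiv f f"
| step: "iter_pderiv f g \<Longrightarrow> (\<And>x. (g has_derivative g' x) (at x)) \<Longrightarrow> v \<in> Basis
          \<Longrightarrow> iter_pderiv f (\<lambda>x. g' x v)"

definition smooth_fun :: "('a::euclidean_space \<Rightarrow> real) \<Rightarrow> bool" where
  "smooth_fun f \<longleftrightarrow> (\<forall>g. iter_pderiv f g \<longrightarrow> (\<forall>x. g differentiable (at x)))"

definition compact_support :: "('a::euclidean_space \<Rightarrow> real) \<Rightarrow> bool" where
  "compact_support f \<longleftrightarrow> compact (closure {x. f x \<noteq> 0})"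

definition rescale_kernel :: "('a::euclidean_space \<Rightarrow> real) \<Rightarrow> real \<Rightarrow> 'a \<Rightarrow> real" where
  "rescale_kernel \<kappa> \<epsilon> z = (1 / \<epsilon> ^ DIM('a)) * \<kappa> ((1 / \<epsilon>) *\<^sub>R z)"

definition conv :: "('a::euclidean_space \<Rightarrow> real) \<Rightarrow> ('a \<Rightarrow> real) \<Rightarrow> 'a \<Rightarrow> real" where
  "conv f g x = (\<integral>y. f y * g (x - y) \<partial>lborel)"

definition locally_integrable :: "('a::euclidean_space \<Rightarrow> real) \<Rightarrow> bool" where
  "locally_integrable u \<longleftrightarrow> (\<forall>K. compact K \<longrightarrow> set_integrable lborel K u)"

end

theory Submission imports Defs begin

lemma kernel_int:
  fixes \<kappa> :: "'a::euclidean_space \<Rightarrow> real"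
  assumes km: "\<kappa> \<in> borel_measurable borel" and k1: "(\<integral>x. \<kappa> x \<partial>lborel) = 1" and e: "\<epsilon> > 0"
  shows "(\<integral>y. rescale_kernel \<kappa> \<epsilon> (x - y) \<partial>lborel) = 1"
proof -
  have c: "-\<epsilon> \<noteq> 0" using e by simp
  let ?g = "\<lambda>y. rescale_kernel \<kappa> \<epsilon> (x - y)"
  have gm: "?g \<in> borel_measurable borel" unfolding rescale_kernel_def using km by measurable
  have "(\<integral>y. ?g y \<partial>lborel) = (\<integral>y. ?g y \<partial>density (distr lborel borel (\<lambda>z. x + (-\<epsilon>) *\<^sub>R z)) (\<lambda>_. ennreal (\<epsilon>^DIM('a))))"
    using lborel_affine[OF c, of x] e by (simp add: ennreal_power)
  also have "\<dots> = (\<integral>y. \<epsilon>^DIM('a) * ?g y \<partial>distr lborel borel (\<lambda>z. x + (-\<epsilon>) *\<^sub>R z))"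
    by (subst integral_density) (use gm e in auto)
  also have "\<dots> = (\<integral>z. \<epsilon>^DIM('a) * ?g (x + (-\<epsilon>) *\<^sub>R z) \<partial>lborel)"
    by (subst integral_distr) (use gm in auto)
  also have "\<dots> = (\<integral>z. \<kappa> z \<partial>lborel)"
    using e by (intro Bochner_Integration.integral_cong) (auto simp: rescale_kernel_def)
  finally show ?thesis using k1 by simp
qed

lemma phi_bounds:
  fixes \<Phi> :: "real \<Rightarrow> real"
  assumes "continuous_on {0..} \<Phi>" "\<Phi> C1_differentiable_on {0<..}" "\<Phi> 0 = 0"
    and "\<And>\<xi>. \<xi> > 0 \<Longrightarrow> a \<le> deriv \<Phi> \<xi> \<and> deriv \<Phi> \<xi> \<le> A"
    and "\<xi> \<ge> 0"
  shows "a * \<xi> \<le> \<Phi> \<xi> \<and> \<Phi> \<xi> \<le> A * \<xi>"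
proof (cases "\<xi> = 0")
  case True then show ?thesis using assms by simp
next
  case False
  then have xp: "0 < \<xi>" using assms by simp
  obtain D where D: "\<And>z. z \<in> {0<..} \<Longrightarrow> (\<Phi> has_vector_derivative D z) (at z)"
    using assms(2) unfolding C1_differentiable_on_def by blast
  have "continuous_on {0..\<xi>} \<Phi>" using assms(1) by (rule continuous_on_subset) auto
  moreover have "\<forall>z. 0 < z \<and> z < \<xi> \<longrightarrow> \<Phi> differentiable (at z)"
    using D by (metis differentiable_def greaterThan_iff has_vector_derivative_def)
  ultimately obtain l z where z: "0 < z" "z < \<xi>" "DERIV \<Phi> z :> l" "\<Phi> \<xi> - \<Phi> 0 = (\<xi> - 0) * l"
    using MVT[OF xp] by blast
  have "deriv \<Phi> z = l" using z(3) by (rule DERIV_imp_deriv)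
  then have "a \<le> l" "l \<le> A" using assms(4)[OF z(1)] by auto
  then show ?thesis using z(4) assms(3) xp by (simp add: mult_left_mono mult.commute)
qed


lemma sqrt_amgm:
  fixes u t :: real assumes "u \<ge> 0" "t > 0"
  shows "sqrt u \<le> (t * u + 1 / t) / 2"
proof -
  define s where "s = sqrt u"
  have u: "u = s^2" "s \<ge> 0" using assms by (auto simp: s_def)
  have "0 \<le> (t * s - 1)^2" by simp
  then have h: "2 * t * s \<le> t^2 * s^2 + 1" by (simp add: power2_eq_square algebra_simps)
  have "(t * u + 1 / t) / 2 = (t^2 * s^2 + 1) / (2 * t)" using assms(2) u
    by (simp add: field_simps power2_eq_square)
  moreover have "s \<le> (t^2 * s^2 + 1) / (2 * t)" using h assms(2) by (subst pos_le_divide_eq) (auto simp: mult_ac)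
  ultimately have "s \<le> (t * u + 1 / t) / 2" by linarith
  then show ?thesis by (simp add: s_def)
qed

lemma opt_bound:
  fixes L U c :: real assumes "U \<ge> 0" "c \<ge> 0" "\<And>t. t > 0 \<Longrightarrow> L \<le> c * (t * U + 1 / t)"
  shows "L \<le> 2 * c * sqrt U"
proof (cases "U = 0")
  case True
  have "L \<le> 0"
  proof (rule ccontr)
    assume "\<not> L \<le> 0"
    then have Lp: "L > 0" by simp
    show False
    proof (cases "c = 0")
      case True then show False using assms(3)[of 1] Lp by simp
    next
      case False
      then have cp: "c > 0" using assms by simp
      have tp: "2 * c / L > 0" using cp Lp by simp
      have "L \<le> c * ((2 * c / L) * U + 1 / (2 * c / L))" using assms(3)[OF tp] .
      also have "\<dots> = L / 2" using cp Lp True by (simp add: field_simps)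
      finally show False using Lp by simp
    qed
  qed
  then show ?thesis using True by simp
next
  case False
  then have Up: "U > 0" using assms by simp
  have tp: "1 / sqrt U > 0" using Up by simp
  have "L \<le> c * ((1 / sqrt U) * U + 1 / (1 / sqrt U))" using assms(3)[OF tp] .
  also have "(1 / sqrt U) * U = sqrt U" using Up by (simp add: real_div_sqrt)
  finally show ?thesis by simp
qed

theorem lemma7p4:
  fixes \<Phi> :: "real \<Rightarrow> real" and \<kappa> :: "'a::euclidean_space \<Rightarrow> real" and a A :: real
  assumes "continuous_on {0..} \<Phi>"
    and "\<Phi> C1_differentiable_on {0<..}"
    and "\<Phi> 0 = 0"
    and "0 < a" and "a \<le> A"
    and "\<And>\<xi>. \<xi> > 0 \<Longrightarrow> a \<le> deriv \<Phi> \<xi> \<and> deriv \<Phi> \<xi> \<le> A"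
    and "\<And>x. \<kappa> x \<ge> 0"
    and "smooth_fun \<kappa>"
    and "compact_support \<kappa>"
    and "(\<integral>x. \<kappa> x \<partial>lborel) = 1"
  shows "\<exists>\<theta>::real. 1 \<le> \<theta> \<and>
    (\<forall>\<epsilon>>0. \<forall>u::'a \<Rightarrow> real. \<forall>x.
       (\<forall>y. u y \<ge> 0) \<longrightarrow> locally_integrable u \<longrightarrow>
       conv (\<lambda>y. sqrt (\<Phi> (u y))) (rescale_kernel \<kappa> \<epsilon>) x
         \<le> \<theta> * sqrt (\<Phi> (conv u (rescale_kernel \<kappa> \<epsilon>) x)))"
proof -
  have PB: "a * \<xi> \<le> \<Phi> \<xi> \<and> \<Phi> \<xi> \<le> A * \<xi>" if "\<xi> \<ge> 0" for \<xi>
    using phi_bounds[OF assms(1,2,3) assms(6) that] .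
  have kdiff: "\<kappa> differentiable (at z)" for z
    using assms(8) iter_pderiv.base unfolding smooth_fun_def by blast
  have kcont: "continuous_on UNIV \<kappa>"
    using kdiff by (simp add: differentiable_imp_continuous_on differentiable_on_def differentiable_at_withinI)
  have km[measurable]: "\<kappa> \<in> borel_measurable borel"
    using kcont by (rule borel_measurable_continuous_onI)
  define S where "S = closure {z. \<kappa> z \<noteq> 0}"
  have Sc: "compact S" using assms(9) unfolding compact_support_def S_def .
  have "compact (\<kappa> ` S)" using Sc continuous_on_subset[OF kcont] by (intro compact_continuous_image) auto
  then have "bounded (\<kappa> ` S)" by (rule compact_imp_bounded)
  then obtain B where B0: "\<forall>w\<in>\<kappa> ` S. norm w \<le> B" unfolding bounded_iff by (elim exE)
  have B: "norm w \<le> B" if "w \<in> \<kappa> ` S" for w using B0 that by auto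
  have kB: "\<kappa> z \<le> max B 0" for z
  proof (cases "z \<in> S")
    case True then show ?thesis using B[of "\<kappa> z"] by auto
  next
    case False then have "\<kappa> z = 0" unfolding S_def using closure_subset[of "{z. \<kappa> z \<noteq> 0}"] by auto
    then show ?thesis by simp
  qed
  define \<theta> where "\<theta> = sqrt (A / a)"
  have th1: "1 \<le> \<theta>" unfolding \<theta>_def using assms(4,5) by simp
  show ?thesis
  proof (intro exI[of _ \<theta>] conjI th1 allI impI)
    fix \<epsilon> :: real and u :: "'a \<Rightarrow> real" and x :: 'a
    assume e: "\<epsilon> > 0" and u0: "\<forall>y. u y \<ge> 0" and uli: "locally_integrable u"
    define K where "K y = rescale_kernel \<kappa> \<epsilon> (x - y)" for y
    have Km[measurable]: "K \<in> borel_measurable borel" unfolding K_def rescale_kernel_def by measurable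
    have K0: "K y \<ge> 0" for y unfolding K_def rescale_kernel_def using assms(7) e by simp
    have KB: "K y \<le> max B 0 / \<epsilon> ^ DIM('a)" for y
      unfolding K_def rescale_kernel_def using kB e by (simp add: divide_right_mono)
    have K1: "(\<integral>y. K y \<partial>lborel) = 1" unfolding K_def using kernel_int[OF km assms(10) e] .
    have Kint: "integrable lborel K" using K1 not_integrable_integral_eq[of lborel K] by auto
    define C where "C = (\<lambda>z. x - \<epsilon> *\<^sub>R z) ` S"
    have Cc: "compact C" unfolding C_def using Sc
      by (intro compact_continuous_image) (auto intro!: continuous_intros)
    have KC: "K y = indicator C y * K y" for y
    proof (cases "K y = 0")
      case False
      then have "\<kappa> ((1 / \<epsilon>) *\<^sub>R (x - y)) \<noteq> 0" unfolding K_def rescale_kernel_def by simp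
      then have "(1 / \<epsilon>) *\<^sub>R (x - y) \<in> S" unfolding S_def
        using closure_subset[of "{z. \<kappa> z \<noteq> 0}"] by auto
      moreover have "y = x - \<epsilon> *\<^sub>R ((1 / \<epsilon>) *\<^sub>R (x - y))" using e by simp
      ultimately have "y \<in> C" unfolding C_def by blast
      then show ?thesis by simp
    qed simp
    have uC: "integrable lborel (\<lambda>y. indicator C y *\<^sub>R u y)"
      using uli Cc unfolding locally_integrable_def set_integrable_def by blast
    have uCm[measurable]: "(\<lambda>y. indicator C y *\<^sub>R u y) \<in> borel_measurable lborel"
      using uC by (rule borel_measurable_integrable)
    have uK: "integrable lborel (\<lambda>y. u y * K y)"
    proof (rule Bochner_Integration.integrable_bound[OF integrable_mult_right[OF uC, of "max B 0 / \<epsilon> ^ DIM('a)"]])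
      have "(\<lambda>y. u y * K y) = (\<lambda>y. (indicator C y *\<^sub>R u y) * K y)"
        by (rule ext, subst KC) (simp add: mult_ac)
      moreover have m1: "(\<lambda>y. indicator C y * u y) \<in> borel_measurable borel" using uCm by simp
      have "(\<lambda>y. (indicator C y * u y) * K y) \<in> borel_measurable borel" using m1 Km by (rule borel_measurable_times)
      ultimately show "(\<lambda>y. u y * K y) \<in> borel_measurable lborel" by simp
      show "AE y in lborel. norm (u y * K y) \<le> norm (max B 0 / \<epsilon> ^ DIM('a) * (indicator C y *\<^sub>R u y))"
      proof (intro AE_I2)
        fix y
        have "norm (u y * K y) = u y * K y" using u0 K0 by simp
        also have "\<dots> = indicator C y * u y * K y" by (subst KC) (simp add: mult_ac)
        also have "\<dots> \<le> indicator C y * u y * (max B 0 / \<epsilon> ^ DIM('a))"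
          using KB u0 by (intro mult_left_mono) (auto simp: indicator_def)
        also have "\<dots> = norm (max B 0 / \<epsilon> ^ DIM('a) * (indicator C y *\<^sub>R u y))"
          using u0 e by (simp add: abs_mult indicator_def)
        finally show "norm (u y * K y) \<le> norm (max B 0 / \<epsilon> ^ DIM('a) * (indicator C y *\<^sub>R u y))" .
      qed
    qed
    define U where "U = (\<integral>y. u y * K y \<partial>lborel)"
    have U0: "U \<ge> 0" unfolding U_def using u0 K0 by (intro integral_nonneg_AE) auto
    have RHS: "conv u (rescale_kernel \<kappa> \<epsilon>) x = U" unfolding conv_def U_def K_def ..
    have LHS: "conv (\<lambda>y. sqrt (\<Phi> (u y))) (rescale_kernel \<kappa> \<epsilon>) x = (\<integral>y. sqrt (\<Phi> (u y)) * K y \<partial>lborel)"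
      unfolding conv_def K_def ..
    have Phi0: "\<Phi> U \<ge> 0" using PB[OF U0] U0 assms(4) by (smt (verit) mult_nonneg_nonneg)
    have main: "(\<integral>y. sqrt (\<Phi> (u y)) * K y \<partial>lborel) \<le> sqrt A * sqrt U"
    proof (cases "integrable lborel (\<lambda>y. sqrt (\<Phi> (u y)) * K y)")
      case False
      then show ?thesis using U0 assms(4,5) by (simp add: not_integrable_integral_eq)
    next
      case True
      have "(\<integral>y. sqrt (\<Phi> (u y)) * K y \<partial>lborel) \<le> 2 * (sqrt A / 2) * sqrt U"
      proof (rule opt_bound[OF U0])
        show "0 \<le> sqrt A / 2" using assms(4,5) by simp
        fix t :: real assume t: "t > 0"
        have "(\<integral>y. sqrt (\<Phi> (u y)) * K y \<partial>lborel) \<le>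
              (\<integral>y. sqrt A / 2 * (t * (u y * K y) + 1 / t * K y) \<partial>lborel)"
        proof (rule integral_mono[OF True])
          show "integrable lborel (\<lambda>y. sqrt A / 2 * (t * (u y * K y) + 1 / t * K y))"
            using uK Kint by auto
          fix y
          have "sqrt (\<Phi> (u y)) \<le> sqrt (A * u y)" using PB[of "u y"] u0 by simp
          also have "\<dots> = sqrt A * sqrt (u y)" by (simp add: real_sqrt_mult)
          also have "\<dots> \<le> sqrt A * ((t * u y + 1 / t) / 2)"
            using sqrt_amgm[of "u y" t] u0 t assms(4,5) by (intro mult_left_mono) auto
          finally have "sqrt (\<Phi> (u y)) * K y \<le> sqrt A * ((t * u y + 1 / t) / 2) * K y"
            using K0 by (intro mult_right_mono) auto
          then show "sqrt (\<Phi> (u y)) * K y \<le> sqrt A / 2 * (t * (u y * K y) + 1 / t * K y)"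
            by (simp add: algebra_simps)
        qed
        also have "\<dots> = sqrt A / 2 * (t * U + 1 / t)"
          using uK Kint K1 by (simp add: U_def)
        finally show "(\<integral>y. sqrt (\<Phi> (u y)) * K y \<partial>lborel) \<le> sqrt A / 2 * (t * U + 1 / t)" .
      qed
      then show ?thesis by simp
    qed
    have "sqrt A * sqrt U = \<theta> * sqrt (a * U)"
      unfolding \<theta>_def using assms(4) by (simp add: real_sqrt_mult real_sqrt_divide)
    also have "\<dots> \<le> \<theta> * sqrt (\<Phi> U)"
      using PB[OF U0] th1 by (intro mult_left_mono) auto
    finally show "conv (\<lambda>y. sqrt (\<Phi> (u y))) (rescale_kernel \<kappa> \<epsilon>) x
         \<le> \<theta> * sqrt (\<Phi> (conv u (rescale_kernel \<kappa> \<epsilon>) x))"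
      using main LHS RHS by simp
  qed
qed

end
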